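(* Let $\lambda,\mu,\alpha>0$ and let $\xi(t)$, $t\ge 0$, be the Poisson process with uniform catastrophes with parameters $\lambda,\mu,\alpha$ (defined in the context). Let $\varphi:(0,\infty)\to(0,\infty)$ be a function with $\varphi(T)\to\infty$ as $T\to\infty$, and suppose there is $k>0$ such that $\lim_{T\to\infty}\varphi(T)/T=k$. Then the family of random variables $\xi_T(1):=\xi(T)/\varphi(T)$ satisfies the large deviation principle on $\mathbb{R}$ with normalizing function $\psi(T)=\varphi(T)$ and rate function $$ J_k(x)=\begin{cases}\infty, & x\in(-\infty,0),\\ x\ln\left(\frac{\lambda+\mu}{\lambda}\right), & x\in\left[0,\frac{\alpha}{k}\right),\\ x\ln\left(\frac{kx(\lambda+\mu)}{\alpha\lambda}\right)-x+\frac{\alpha}{k}, & x\in\left[\frac{\alpha}{k},\infty\right).\end{cases} $$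
   Context: Poisson process with uniform catastrophes: let $\eta(n)$, $n\in\mathbb{Z}^+=\{0,1,2,\dots\}$, be a Markov chain on $\mathbb{Z}^+$ with $\eta(0)=0$ and transition probabilities $\mathbf{P}(\eta(n+1)=j\mid\eta(n)=i)=\frac{\lambda}{\lambda+\mu}$ if $j=i+1$ (and $i\ge 1$), $=\frac{\mu}{i(\lambda+\mu)}$ if $0\le j<i$, $i\neq0$, and $=1$ if $i=0$, $j=1$. Let $\nu(t)$, $t\ge0$, be a Poisson process with rate $\alpha$, independent of $\eta$. Set $\xi(t):=\eta(\nu(t))$. Large deviation principle (LDP): a family of real random variables $X_T$ satisfies the LDP with rate function $I:\mathbb{R}\to[0,\infty]$ and normalizing function $\psi(T)\to\infty$ if for every $c\ge0$ the set $\{x: I(x)\le c\}$ is compact, and for every Borel set $B\subseteq\mathbb{R}$, $\limsup_{T\to\infty}\frac{1}{\psi(T)}\ln\mathbf{P}(X_T\in B)\le -I([B])$ and $\liminf_{T\to\infty}\frac{1}{\psi(T)}\ln\mathbf{P}(X_T\in B)\ge -I((B))$, where $[B]$ and $(B)$ denote closure and interior, $I(B)=\inf_{x\in B}I(x)$ and $I(\emptyset)=\infty$. *)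

theory Defs
  imports "HOL-Probability.Probability"
begin

definition eta_step :: "real \<Rightarrow> real \<Rightarrow> nat \<Rightarrow> nat pmf" where
  "eta_step lam mu i =
     (if i = 0 then return_pmf 1
      else bind_pmf (bernoulli_pmf (lam / (lam + mu)))
             (\<lambda>b. if b then return_pmf (i + 1) else pmf_of_set {..<i}))"

fun eta_law :: "real \<Rightarrow> real \<Rightarrow> nat \<Rightarrow> nat pmf" where
  "eta_law lam mu 0 = return_pmf 0"
| "eta_law lam mu (Suc n) = bind_pmf (eta_law lam mu n) (eta_step lam mu)"

text \<open>Law of xi(t) = eta(nu(t)), nu a rate-alpha Poisson process independent of eta:
  nu(t) ~ Poisson(alpha t) (and nu(0) = 0).\<close>
definition xi_law :: "real \<Rightarrow> real \<Rightarrow> real \<Rightarrow> real \<Rightarrow> nat pmf" where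
  "xi_law lam mu alpha t =
     (if t > 0 then bind_pmf (poisson_pmf (alpha * t)) (eta_law lam mu) else return_pmf 0)"

definition eln :: "real \<Rightarrow> ereal" where
  "eln p = (if p = 0 then - \<infinity> else ereal (ln p))"

text \<open>Large deviation principle for a family of real random variables, given through
  the probabilities P T B = P(X_T \<in> B), with rate function I and normalization psi.\<close>
definition LDP :: "(real \<Rightarrow> real set \<Rightarrow> real) \<Rightarrow> (real \<Rightarrow> ereal) \<Rightarrow> (real \<Rightarrow> real) \<Rightarrow> bool" where
  "LDP P I psi \<longleftrightarrow>
     (\<forall>x. I x \<ge> 0) \<and>
     (\<forall>c\<ge>0. compact {x. I x \<le> ereal c}) \<and>
     (\<forall>B \<in> sets borel.
        Limsup at_top (\<lambda>T. eln (P T B) / ereal (psi T)) \<le> - (INF x\<in>closure B. I x) \<and>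
        Liminf at_top (\<lambda>T. eln (P T B) / ereal (psi T)) \<ge> - (INF x\<in>interior B. I x))"

definition J_rate :: "real \<Rightarrow> real \<Rightarrow> real \<Rightarrow> real \<Rightarrow> real \<Rightarrow> ereal" where
  "J_rate lam mu alpha k x =
     (if x < 0 then \<infinity>
      else if x < alpha / k then ereal (x * ln ((lam + mu) / lam))
      else ereal (x * ln (k * x * (lam + mu) / (alpha * lam)) - x + alpha / k))"

end

theory Submission
  imports Defs "HOL-Real_Asymp.Real_Asymp"
begin

fun chn :: "real \<Rightarrow> real \<Rightarrow> nat \<Rightarrow> nat \<Rightarrow> nat pmf" where
  "chn lam mu i 0 = return_pmf i"
| "chn lam mu i (Suc n) = bind_pmf (chn lam mu i n) (eta_step lam mu)"

lemma eta_law_chn: "eta_law lam mu n = chn lam mu 0 n"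
  by (induction n) auto

lemma chn_add: "chn lam mu i (a + b) = bind_pmf (chn lam mu i a) (\<lambda>j. chn lam mu j b)"
  by (induction b) (auto simp: bind_return_pmf' bind_assoc_pmf)

lemma step_set: "set_pmf (eta_step lam mu i) \<subseteq> {..Suc i}"
  unfolding eta_step_def by (auto simp: set_pmf_of_set lessThan_empty_iff split: if_splits)

lemma chn_set: "set_pmf (chn lam mu i n) \<subseteq> {..i+n}"
proof (induction n)
  case 0 then show ?case by simp
next
  case (Suc n)
  show ?case using Suc step_set[of lam mu] by fastforce
qed

lemma nn_integral_bernoulli:
  assumes "0 \<le> q" "q \<le> 1"
  shows "(\<integral>\<^sup>+x. f x \<partial>bernoulli_pmf q) = ennreal q * f True + ennreal (1-q) * f False"
proof -
  have "(\<integral>\<^sup>+x. f x \<partial>bernoulli_pmf q) = (\<integral>\<^sup>+x. ennreal (pmf (bernoulli_pmf q) x) * f x \<partial>count_space UNIV)"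
    by (rule nn_integral_measure_pmf)
  also have "\<dots> = (\<Sum>x\<in>UNIV. ennreal (pmf (bernoulli_pmf q) x) * f x)"
    by (rule nn_integral_count_space_finite) simp
  also have "\<dots> = ennreal q * f True + ennreal (1-q) * f False"
    using assms by (simp add: UNIV_bool add.commute)
  finally show ?thesis .
qed

lemma G1: "ennreal (pmf M n) * g n \<le> (\<integral>\<^sup>+x. g x \<partial>measure_pmf M)"
proof -
  have "(\<integral>\<^sup>+x. g n * indicator {n} x \<partial>measure_pmf M) \<le> (\<integral>\<^sup>+x. g x \<partial>measure_pmf M)"
    by (rule nn_integral_mono) (auto split: split_indicator)
  moreover have "(\<integral>\<^sup>+x. g n * indicator {n} x \<partial>measure_pmf M) = g n * emeasure M {n}"
    by (rule nn_integral_cmult_indicator) simp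
  ultimately show ?thesis by (simp add: emeasure_pmf_single mult.commute)
qed

locale chainpar =
  fixes lam mu :: real
  assumes lam_pos: "lam > 0" and mu_pos: "mu > 0"
begin

definition "p = lam / (lam + mu)"

lemma p_pos: "0 < p" and p_lt1: "p < 1"
  using lam_pos mu_pos by (auto simp: p_def field_simps)

lemma step_nn:
  assumes "i \<ge> 1" "\<And>j. f j \<ge> 0"
  shows "(\<integral>\<^sup>+j. ennreal (f j) \<partial>eta_step lam mu i) = ennreal (p * f (Suc i) + (1-p) * (\<Sum>j<i. f j) / i)"
proof -
  have ne: "{..<i} \<noteq> {}" "finite {..<i}" using assms by (auto simp: lessThan_empty_iff)
  have i0: "i \<noteq> 0" using assms by simp
  have "(\<integral>\<^sup>+j. ennreal (f j) \<partial>eta_step lam mu i)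
      = (\<integral>\<^sup>+b. (\<integral>\<^sup>+j. ennreal (f j) \<partial>(if b then return_pmf (i+1) else pmf_of_set {..<i})) \<partial>bernoulli_pmf p)"
    using i0 unfolding eta_step_def p_def by simp
  also have "\<dots> = ennreal (f (Suc i)) * ennreal p + ennreal (\<Sum>j<i. f j) / of_nat i * ennreal (1 - p)"
    using p_pos p_lt1 ne assms(2) by (simp add: nn_integral_bernoulli nn_integral_pmf_of_set)
  also have "ennreal (\<Sum>j<i. f j) / of_nat i = ennreal ((\<Sum>j<i. f j) / i)"
    using assms i0 by (simp add: sum_nonneg ennreal_of_nat_eq_real_of_nat divide_ennreal)
  also have "ennreal (f (Suc i)) * ennreal p + ennreal ((\<Sum>j<i. f j) / i) * ennreal (1 - p)
      = ennreal (p * f (Suc i) + (1-p) * ((\<Sum>j<i. f j) / i))"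
    using p_pos p_lt1 assms by (simp add: ennreal_mult[symmetric] ennreal_plus sum_nonneg mult.commute)
  finally show ?thesis by simp
qed

lemma step0: "eta_step lam mu 0 = return_pmf 1"
  by (simp add: eta_step_def)

lemma step_up: "i \<ge> 1 \<Longrightarrow> emeasure (measure_pmf (eta_step lam mu i)) {Suc i} \<ge> ennreal p"
proof -
  assume i: "i \<ge> 1"
  have "emeasure (measure_pmf (eta_step lam mu i)) {Suc i}
      = (\<integral>\<^sup>+j. ennreal (indicator {Suc i} j) \<partial>eta_step lam mu i)"
    by (simp add: ennreal_indicator)
  also have "\<dots> = ennreal (p * 1 + (1-p) * (\<Sum>j<i. indicator {Suc i} j) / i)"
    using i by (subst step_nn) auto
  also have "\<dots> \<ge> ennreal p"
    using p_lt1 by (intro ennreal_leI) (auto intro!: sum_nonneg divide_nonneg_nonneg)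
  finally show ?thesis .
qed

lemma step_low: "emeasure (measure_pmf (eta_step lam mu i)) {0,1} \<ge> ennreal ((1-p) / (i+1))"
proof (cases "i = 0")
  case True
  then show ?thesis using p_pos p_lt1 by (simp add: step0 ennreal_leI)
next
  case False
  then have i: "i \<ge> 1" by simp
  have "emeasure (measure_pmf (eta_step lam mu i)) {0,1}
      = (\<integral>\<^sup>+j. ennreal (indicator {0,1} j) \<partial>eta_step lam mu i)"
    by (simp add: ennreal_indicator)
  also have "\<dots> = ennreal (p * indicator {0,1} (Suc i) + (1-p) * (\<Sum>j<i. indicator {0,1} j) / i)"
    using i by (subst step_nn) auto
  also have "\<dots> \<ge> ennreal ((1-p) / (i+1))"
  proof (intro ennreal_leI)
    have "(\<Sum>j<i. indicator {0,1} j :: real) \<ge> indicator {0,1} (0::nat)"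
      by (rule member_le_sum) (use i in auto)
    then have s1: "(\<Sum>j<i. indicator {0,1} j :: real) \<ge> 1" by simp
    have "(1-p) / (i+1) \<le> (1-p) / i"
      using i p_lt1 by (intro divide_left_mono) auto
    also have "\<dots> \<le> (1-p) * (\<Sum>j<i. indicator {0,1} j) / i"
      using s1 p_lt1 i by (simp add: divide_right_mono)
    also have "\<dots> \<le> p * indicator {0,1} (Suc i) + (1-p) * (\<Sum>j<i. indicator {0,1} j) / i"
      using p_pos by simp
    finally show "(1-p) / (i+1) \<le> p * indicator {0,1} (Suc i) + (1-p) * (\<Sum>j<i. indicator {0,1} j) / i" .
  qed
  finally show ?thesis .
qed

lemma emeasure_bind_ge:
  "ennreal (pmf M n) * emeasure (measure_pmf (f n)) A \<le> emeasure (measure_pmf (bind_pmf M f)) A"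
  using G1[of M n "\<lambda>x. emeasure (measure_pmf (f x)) A"] by simp

lemma chn_up: "s \<ge> 1 \<Longrightarrow> emeasure (measure_pmf (chn lam mu s j)) {s+j} \<ge> ennreal (p^j)"
proof (induction j)
  case 0 then show ?case by simp
next
  case (Suc j)
  have "ennreal (p ^ Suc j) = ennreal (p^j) * ennreal p"
    using p_pos by (simp add: ennreal_mult[symmetric] mult.commute)
  also have "\<dots> \<le> ennreal (pmf (chn lam mu s j) (s+j)) * emeasure (measure_pmf (eta_step lam mu (s+j))) {Suc (s+j)}"
    using Suc step_up[of "s+j"] by (intro mult_mono) (auto simp: emeasure_pmf_single)
  also have "\<dots> \<le> emeasure (measure_pmf (chn lam mu s (Suc j))) {s + Suc j}"
    using emeasure_bind_ge[of "chn lam mu s j" "s+j" "eta_step lam mu" "{Suc (s+j)}"] by simp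
  finally show ?case .
qed

lemma chn_low: "t \<ge> 1 \<Longrightarrow> emeasure (measure_pmf (chn lam mu 0 t)) {0,1} \<ge> ennreal ((1-p) / t)"
proof -
  assume t: "t \<ge> 1"
  then obtain u where u: "t = Suc u" by (cases t) auto
  have "emeasure (measure_pmf (chn lam mu 0 t)) {0,1}
       = (\<integral>\<^sup>+i. emeasure (measure_pmf (eta_step lam mu i)) {0,1} \<partial>chn lam mu 0 u)"
    by (simp add: u)
  also have "\<dots> \<ge> (\<integral>\<^sup>+i. ennreal ((1-p) / t) \<partial>chn lam mu 0 u)"
  proof (rule nn_integral_mono_AE)
    show "AE x in measure_pmf (chn lam mu 0 u). ennreal ((1 - p) / real t) \<le> emeasure (measure_pmf (eta_step lam mu x)) {0, 1}"
    proof (rule AE_pmfI)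
      fix x assume "x \<in> set_pmf (chn lam mu 0 u)"
      then have "x \<le> u" using chn_set[of lam mu 0 u] by auto
      then have "(1-p) / t \<le> (1-p) / (x+1)"
        using p_lt1 u by (intro divide_left_mono) auto
      then show "ennreal ((1 - p) / real t) \<le> emeasure (measure_pmf (eta_step lam mu x)) {0, 1}"
        using step_low[of x] by (meson ennreal_leI order_trans)
    qed
  qed
  finally show ?thesis by simp
qed

lemma chn01: "chn lam mu 0 (Suc n) = chn lam mu 1 n"
proof -
  have "chn lam mu 0 (1 + n) = bind_pmf (chn lam mu 0 1) (\<lambda>j. chn lam mu j n)"
    by (rule chn_add)
  then show ?thesis by (simp add: step0 bind_return_pmf)
qed

lemma chn_target:
  assumes "t \<ge> 1" "m \<ge> 1"
  shows "emeasure (measure_pmf (chn lam mu 0 (t+m))) {m, Suc m} \<ge> ennreal ((1-p) / t * p^m)"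
proof -
  have A: "emeasure (measure_pmf (chn lam mu j m)) {m, Suc m} \<ge> ennreal (p^m) * indicator {0,1} j" for j
  proof (cases "j = 0 \<or> j = 1")
    case True
    then show ?thesis
    proof
      assume j: "j = 0"
      obtain m' where m': "m = Suc m'" using assms by (cases m) auto
      have "ennreal (p^m) \<le> ennreal (p^m')"
        using p_pos p_lt1 m' by (intro ennreal_leI power_decreasing) auto
      also have "\<dots> \<le> emeasure (measure_pmf (chn lam mu 1 m')) {1+m'}"
        by (rule chn_up) simp
      also have "\<dots> \<le> emeasure (measure_pmf (chn lam mu 1 m')) {m, Suc m}"
        by (intro emeasure_mono) (auto simp: m')
      finally have "ennreal (p^m) \<le> emeasure (measure_pmf (chn lam mu 1 m')) {m, Suc m}" .
      moreover have eq: "chn lam mu 0 m = chn lam mu 1 m'" by (simp only: m' chn01)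
      ultimately show ?thesis using j by (simp add: eq)
    next
      assume j: "j = 1"
      have "ennreal (p^m) \<le> emeasure (measure_pmf (chn lam mu 1 m)) {1+m}"
        by (rule chn_up) simp
      also have "\<dots> \<le> emeasure (measure_pmf (chn lam mu 1 m)) {m, Suc m}"
        by (intro emeasure_mono) auto
      finally show ?thesis using j by simp
    qed
  next
    case False then show ?thesis by simp
  qed
  have "ennreal ((1-p) / t * p^m) = ennreal (p^m) * ennreal ((1-p) / t)"
    using p_pos p_lt1 by (simp add: ennreal_mult[symmetric] mult.commute)
  also have "\<dots> \<le> ennreal (p^m) * emeasure (measure_pmf (chn lam mu 0 t)) {0,1}"
    using chn_low[OF assms(1)] by (intro mult_left_mono) auto
  also have "\<dots> = (\<integral>\<^sup>+j. ennreal (p^m) * indicator {0,1} j \<partial>chn lam mu 0 t)"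
    by (rule nn_integral_cmult_indicator[symmetric]) simp
  also have "\<dots> \<le> (\<integral>\<^sup>+j. emeasure (measure_pmf (chn lam mu j m)) {m, Suc m} \<partial>chn lam mu 0 t)"
    by (intro nn_integral_mono A)
  also have "\<dots> = emeasure (measure_pmf (chn lam mu 0 (t+m))) {m, Suc m}"
    by (simp add: chn_add)
  finally show ?thesis by simp
qed


end

context chainpar begin
lemma lyap_real:
  assumes r1: "1 < r" and pr: "p * r < 1"
  shows "\<exists>K\<ge>r. \<forall>i\<ge>1. p * r^(Suc i) + (1-p) * (\<Sum>j<i. r^j) / i \<le> r^i + K"
proof -
  define c where "c = (1-p) / (r-1)"
  define i0 where "i0 = nat \<lceil>c / (1 - p*r)\<rceil>"
  define K where "K = r^i0 * (p*r + c) + r"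
  have c0: "c \<ge> 0" using p_lt1 r1 by (simp add: c_def)
  have K: "K \<ge> r" using c0 p_pos r1 by (simp add: K_def)
  have "p * r^(Suc i) + (1-p) * (\<Sum>j<i. r^j) / i \<le> r^i + K" if i: "i \<ge> 1" for i
  proof -
    have S: "(\<Sum>j<i. r^j) = (r^i - 1) / (r - 1)"
      using r1 by (simp add: geometric_sum)
    have "(1-p) * (\<Sum>j<i. r^j) / i = c * (r^i - 1) / i"
      by (simp add: S c_def)
    also have "\<dots> \<le> c * r^i / i"
      using c0 i by (intro divide_right_mono mult_left_mono) auto
    finally have A: "p * r^(Suc i) + (1-p) * (\<Sum>j<i. r^j) / i \<le> p*r*r^i + c * r^i / i"
      by simp
    show ?thesis
    proof (cases "i \<ge> i0")
      case True
      have "c / (1 - p*r) \<le> i"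
        using True unfolding i0_def by linarith
      then have "c \<le> (1 - p*r) * i" using pr by (simp add: field_simps)
      then have "c / i \<le> 1 - p*r" using i by (simp add: field_simps)
      then have "(c / i) * r^i \<le> (1 - p*r) * r^i"
        using r1 by (intro mult_right_mono) auto
      then have "c * r^i / i \<le> (1 - p*r) * r^i" by simp
      then have "p*r*r^i + c * r^i / i \<le> r^i" by (simp add: algebra_simps)
      then show ?thesis using A K r1 by linarith
    next
      case False
      have ri: "r^i \<le> r^i0" using False r1 by (intro power_increasing) auto
      have cr: "c * r^i \<ge> 0" using c0 r1 by simp
      have "c * r^i / i \<le> c * r^i / 1"
        using cr i by (intro divide_left_mono) auto
      then have "c * r^i / i \<le> c * r^i" by simp
      also have "\<dots> \<le> c * r^i0" using ri c0 by (intro mult_left_mono) auto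
      finally have B: "c * r^i / i \<le> c * r^i0" .
      have C: "p*r*r^i \<le> p*r*r^i0" using ri p_pos r1 by (intro mult_left_mono) auto
      have D: "p*r*r^i0 + c*r^i0 + r = K" by (simp add: K_def algebra_simps)
      have "p*r*r^i + c * r^i / i \<le> K" using B C D r1 by linarith
      moreover have "r^i \<ge> 0" using r1 by simp
      ultimately show ?thesis using A by linarith
    qed
  qed
  then show ?thesis using K by blast
qed

lemma step_lyap:
  assumes "1 < r" "\<forall>i\<ge>1. p * r^(Suc i) + (1-p) * (\<Sum>j<i. r^j) / i \<le> r^i + K" "K \<ge> r"
  shows "(\<integral>\<^sup>+j. ennreal (r^j) \<partial>eta_step lam mu i) \<le> ennreal (r^i + K)"
proof (cases "i = 0")
  case True
  have "ennreal r \<le> ennreal (1 + K)" using assms by (intro ennreal_leI) simp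
  then show ?thesis using True by (simp add: step0 del: ennreal_plus)
next
  case False
  then have i: "i \<ge> 1" by simp
  have "(\<integral>\<^sup>+j. ennreal (r^j) \<partial>eta_step lam mu i) = ennreal (p * r^(Suc i) + (1-p) * (\<Sum>j<i. r^j) / i)"
    by (rule step_nn[where f="\<lambda>j. r^j"]) (use i assms(1) in auto)
  also have "\<dots> \<le> ennreal (r^i + K)"
    using assms(2) i by (intro ennreal_leI) auto
  finally show ?thesis .
qed

lemma chn_lyap:
  assumes "1 < r" "\<forall>i\<ge>1. p * r^(Suc i) + (1-p) * (\<Sum>j<i. r^j) / i \<le> r^i + K" "K \<ge> r"
  shows "(\<integral>\<^sup>+j. ennreal (r^j) \<partial>chn lam mu 0 n) \<le> ennreal (1 + real n * K)"
proof (induction n)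
  case 0 then show ?case by simp
next
  case (Suc n)
  have K0: "K \<ge> 0" using assms by simp
  have "(\<integral>\<^sup>+j. ennreal (r^j) \<partial>chn lam mu 0 (Suc n))
      = (\<integral>\<^sup>+i. (\<integral>\<^sup>+j. ennreal (r^j) \<partial>eta_step lam mu i) \<partial>chn lam mu 0 n)"
    by simp
  also have "\<dots> \<le> (\<integral>\<^sup>+i. (ennreal (r^i) + ennreal K) \<partial>chn lam mu 0 n)"
  proof (intro nn_integral_mono)
    fix i
    have "ennreal (r^i + K) = ennreal (r^i) + ennreal K"
      using K0 assms(1) by (intro ennreal_plus) auto
    then show "(\<integral>\<^sup>+j. ennreal (r^j) \<partial>eta_step lam mu i) \<le> ennreal (r^i) + ennreal K"
      using step_lyap[OF assms, of i] by simp
  qed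
  also have "\<dots> = (\<integral>\<^sup>+i. ennreal (r^i) \<partial>chn lam mu 0 n) + ennreal K"
    by (subst nn_integral_add) auto
  also have "\<dots> \<le> ennreal (1 + real n*K) + ennreal K"
    using Suc by (intro add_right_mono)
  also have "\<dots> = ennreal (1 + real (Suc n) * K)"
  proof -
    have "ennreal (1 + real n*K + K) = ennreal (1 + real n*K) + ennreal K"
      using K0 by (intro ennreal_plus) auto
    moreover have "1 + real n*K + K = 1 + real (Suc n) * K" by (simp add: algebra_simps)
    ultimately show ?thesis by simp
  qed
  finally show ?case .
qed


lemma chn_tail:
  assumes "1 < r" "\<forall>i\<ge>1. p * r^(Suc i) + (1-p) * (\<Sum>j<i. r^j) / i \<le> r^i + K" "K \<ge> r"
    and s: "s \<ge> 1" and x: "x \<ge> 0"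
  shows "emeasure (measure_pmf (chn lam mu 0 n)) {j. real j \<ge> x}
         \<le> ennreal ((1 + real n * K) * s^n / (r * s) powr x)"
proof (cases "real n < x")
  case True
  have "set_pmf (chn lam mu 0 n) \<inter> {j. real j \<ge> x} = {}"
    using chn_set[of lam mu 0 n] True by force
  then have "measure (measure_pmf (chn lam mu 0 n)) {j. real j \<ge> x} = 0"
    by (simp add: measure_pmf_zero_iff)
  then show ?thesis by (simp add: measure_pmf.emeasure_eq_measure)
next
  case False
  have r0: "r > 0" using assms by simp
  have K0: "K \<ge> 0" using assms by simp
  have "emeasure (measure_pmf (chn lam mu 0 n)) {j. real j \<ge> x}
      = (\<integral>\<^sup>+j. indicator {j. real j \<ge> x} j \<partial>chn lam mu 0 n)"
    by simp
  also have "\<dots> \<le> (\<integral>\<^sup>+j. ennreal (1 / r powr x) * ennreal (r^j) \<partial>chn lam mu 0 n)"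
  proof (intro nn_integral_mono)
    fix j
    show "indicator {j. real j \<ge> x} j \<le> ennreal (1 / r powr x) * ennreal (r^j)"
    proof (cases "real j \<ge> x")
      case True
      have "r powr x \<le> r powr (real j)" using True assms by (intro powr_mono) auto
      then have "r powr x \<le> r^j" using r0 by (simp add: powr_realpow)
      then have "1 \<le> 1 / r powr x * r^j" using r0 by (simp add: field_simps)
      then show ?thesis using True r0
        by (simp add: ennreal_mult[symmetric] ennreal_leI)
    qed simp
  qed
  also have "\<dots> = ennreal (1 / r powr x) * (\<integral>\<^sup>+j. ennreal (r^j) \<partial>chn lam mu 0 n)"
    by (rule nn_integral_cmult) simp
  also have "\<dots> \<le> ennreal (1 / r powr x) * ennreal (1 + real n * K)"
    by (intro mult_left_mono chn_lyap[OF assms(1-3)]) simp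
  also have "\<dots> = ennreal (1 / r powr x * (1 + real n * K))"
    using r0 K0 by (intro ennreal_mult[symmetric]) auto
  also have "\<dots> = ennreal ((1 + real n * K) / r powr x)"
    by simp
  also have "\<dots> \<le> ennreal ((1 + real n * K) * s^n / (r * s) powr x)"
  proof (intro ennreal_leI)
    have "s powr x \<le> s powr (real n)" using False s by (intro powr_mono) auto
    then have sx: "s powr x \<le> s^n" using s by (simp add: powr_realpow)
    have sp: "s powr x > 0" using s by simp
    have "(1 + real n * K) / r powr x = (1 + real n * K) * s powr x / (r * s) powr x"
      using r0 s sp by (simp add: powr_mult field_simps)
    also have "\<dots> \<le> (1 + real n * K) * s^n / (r * s) powr x"
      using sx K0 by (intro divide_right_mono mult_left_mono) auto
    finally show "(1 + real n * K) / r powr x \<le> (1 + real n * K) * s^n / (r * s) powr x" .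
  qed
  finally show ?thesis .
qed

end

lemma pois_sum:
  fixes L s K :: real
  assumes "L > 0"
  shows "(\<lambda>n. pmf (poisson_pmf L) n * ((1 + real n * K) * s^n))
           sums (exp (-L) * (exp (L* s) + K * (L* s) * exp (L* s)))"
proof -
  define x where "x = L * s"
  have e1: "(\<lambda>n. x^n / fact n) sums exp x"
    using exp_converges[of x] by (simp add: divide_inverse mult.commute)
  have "(\<lambda>n. x * (x^n / fact n)) sums (x * exp x)"
    by (rule sums_mult[OF e1])
  moreover have "(\<lambda>n. x * (x^n / fact n)) = (\<lambda>n. real (Suc n) * x^(Suc n) / fact (Suc n))"
  proof
    fix n
    have f: "(fact (Suc n) :: real) = real (Suc n) * fact n" by simp
    have "real (Suc n) * x^(Suc n) / fact (Suc n) = x^(Suc n) / fact n"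
      unfolding f by (rule mult_divide_mult_cancel_left) simp
    then show "x * (x^n / fact n) = real (Suc n) * x^(Suc n) / fact (Suc n)" by simp
  qed
  ultimately have "(\<lambda>n. real (Suc n) * x^(Suc n) / fact (Suc n)) sums (x * exp x)" by simp
  then have e2: "(\<lambda>n. real n * x^n / fact n) sums (x * exp x)"
    by (subst (asm) sums_Suc_iff[where f = "\<lambda>n. real n * x^n / fact n"]) simp
  have "(\<lambda>n. exp (-L) * (x^n / fact n + K * (real n * x^n / fact n)))
          sums (exp (-L) * (exp x + K * (x * exp x)))"
    by (intro sums_mult sums_add e1 e2)
  moreover have "(\<lambda>n. exp (-L) * (x^n / fact n + K * (real n * x^n / fact n)))
      = (\<lambda>n. pmf (poisson_pmf L) n * ((1 + real n * K) * s^n))"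
    using assms by (auto simp: fun_eq_iff x_def power_mult_distrib field_simps pmf_poisson[OF assms])
  ultimately show ?thesis by (simp add: x_def mult.assoc)
qed

context chainpar begin

lemma xi_tail:
  assumes "1 < r" "\<forall>i\<ge>1. p * r^(Suc i) + (1-p) * (\<Sum>j<i. r^j) / i \<le> r^i + K" "K \<ge> r"
    and s: "s \<ge> 1" and x: "x \<ge> 0" and T: "T > 0" and al: "alpha > 0"
  shows "measure (measure_pmf (xi_law lam mu alpha T)) {j. real j \<ge> x}
         \<le> exp (-(alpha*T)) * (exp (alpha*T* s) + K * (alpha*T* s) * exp (alpha*T* s)) / (r * s) powr x"
proof -
  define L where "L = alpha * T"
  have L0: "L > 0" using T al by (simp add: L_def)
  define h where "h n = (1 + real n * K) * s^n / (r * s) powr x" for n :: nat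
  have xi: "xi_law lam mu alpha T = bind_pmf (poisson_pmf L) (chn lam mu 0)"
    using T al by (simp add: xi_law_def L_def eta_law_chn[abs_def])
  have sm: "(\<lambda>n. pmf (poisson_pmf L) n * h n) sums
             (exp (-L) * (exp (L* s) + K * (L* s) * exp (L* s)) / (r * s) powr x)"
    unfolding h_def using sums_divide[OF pois_sum[OF L0, of K s], of "(r * s) powr x"]
    by (simp add: mult.assoc)
  have h0: "h n \<ge> 0" for n using assms by (simp add: h_def)
  have "emeasure (measure_pmf (xi_law lam mu alpha T)) {j. real j \<ge> x}
      = (\<integral>\<^sup>+n. emeasure (measure_pmf (chn lam mu 0 n)) {j. real j \<ge> x} \<partial>poisson_pmf L)"
    by (simp add: xi)
  also have "\<dots> \<le> (\<integral>\<^sup>+n. ennreal (h n) \<partial>poisson_pmf L)"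
    unfolding h_def by (intro nn_integral_mono chn_tail[OF assms(1-5)])
  also have "\<dots> = (\<integral>\<^sup>+n. ennreal (pmf (poisson_pmf L) n) * ennreal (h n) \<partial>count_space UNIV)"
    by (rule nn_integral_measure_pmf)
  also have "\<dots> = (\<Sum>n. ennreal (pmf (poisson_pmf L) n * h n))"
    by (simp add: nn_integral_count_space_nat ennreal_mult[symmetric] h0)
  also have "\<dots> = ennreal (\<Sum>n. pmf (poisson_pmf L) n * h n)"
    using sm h0 by (intro suminf_ennreal2) (auto simp: sums_summable)
  also have "\<dots> = ennreal (exp (-L) * (exp (L* s) + K * (L* s) * exp (L* s)) / (r * s) powr x)"
    using sm by (simp add: sums_unique[symmetric])
  finally have "emeasure (measure_pmf (xi_law lam mu alpha T)) {j. real j \<ge> x}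
     \<le> ennreal (exp (-L) * (exp (L* s) + K * (L* s) * exp (L* s)) / (r * s) powr x)" .
  moreover have B0: "0 \<le> exp (-L) * (exp (L * s) + K * (L * s) * exp (L * s)) / (r * s) powr x"
    using L0 assms by (intro divide_nonneg_nonneg mult_nonneg_nonneg add_nonneg_nonneg) auto
  ultimately have "measure (measure_pmf (xi_law lam mu alpha T)) {j. real j \<ge> x}
     \<le> exp (-L) * (exp (L * s) + K * (L * s) * exp (L * s)) / (r * s) powr x"
    by (simp add: measure_pmf.emeasure_eq_measure ennreal_le_iff[OF B0] del: ennreal_plus)
  then show ?thesis by (simp add: L_def)
qed

end

lemma ln_fact_le: "ln (fact n :: real) \<le> (real n + 1) * ln (real n + 1) - real n"
proof (induction n)
  case 0 then show ?case by simp
next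
  case (Suc n)
  have "ln (fact (Suc n) :: real) = ln (real n + 1) + ln (fact n)"
    by (simp add: ln_mult add.commute)
  also have "\<dots> \<le> (real n + 2) * ln (real n + 1) - real n"
    using Suc by (simp add: algebra_simps)
  also have "\<dots> \<le> (real n + 2) * ln (real n + 2) - (real n + 1)"
  proof -
    have "ln ((real n + 1) / (real n + 2)) \<le> (real n + 1) / (real n + 2) - 1"
      by (intro ln_le_minus_one) auto
    also have "\<dots> = - 1 / (real n + 2)" by (simp add: field_simps)
    finally have "ln (real n + 1) - ln (real n + 2) \<le> - 1 / (real n + 2)"
      by (simp add: ln_div)
    then have "(real n + 2) * (ln (real n + 1) - ln (real n + 2)) \<le> (real n + 2) * (- 1 / (real n + 2))"
      by (intro mult_left_mono) auto
    then show ?thesis by (simp add: algebra_simps)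
  qed
  finally show ?case by (simp add: add.commute)
qed

lemma nat_ceil_bounds:
  assumes "v \<ge> 0"
  shows "v \<le> real (nat \<lceil>v\<rceil>) \<and> real (nat \<lceil>v\<rceil>) \<le> v + 1"
proof -
  have "\<lceil>v\<rceil> \<ge> 0" using assms by simp
  then have "real (nat \<lceil>v\<rceil>) = real_of_int \<lceil>v\<rceil>" by simp
  with ceiling_correct[of v] show ?thesis by linarith
qed

locale ldpsetup = chainpar +
  fixes alpha k :: real and phi :: "real \<Rightarrow> real"
  assumes al: "alpha > 0" and kp: "k > 0" and phipos: "\<forall>T>0. phi T > 0"
    and phiinf: "filterlim phi at_top at_top"
    and phik: "((\<lambda>T. phi T / T) \<longlongrightarrow> k) at_top"
begin

lemma ev_pos: "eventually (\<lambda>T. T > 0 \<and> phi T > 0) at_top"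
  using eventually_gt_at_top[of 0] by eventually_elim (use phipos in auto)

lemma T_over_phi: "((\<lambda>T. T / phi T) \<longlongrightarrow> 1/k) at_top"
proof -
  have "((\<lambda>T. inverse (phi T / T)) \<longlongrightarrow> inverse k) at_top"
    using phik kp by (intro tendsto_inverse) auto
  then show ?thesis by (simp add: inverse_eq_divide)
qed

lemma inv_phi: "((\<lambda>T. 1 / phi T) \<longlongrightarrow> 0) at_top"
  using tendsto_inverse_0_at_top[OF phiinf] by (simp add: inverse_eq_divide)

lemma ceil_lim:
  assumes "c \<ge> 0"
  shows "((\<lambda>T. real (nat \<lceil>c * phi T\<rceil>) / phi T) \<longlongrightarrow> c) at_top"
proof (rule tendsto_sandwich[where f = "\<lambda>T. c" and h = "\<lambda>T. c + 1 / phi T"])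
  show "eventually (\<lambda>T. c \<le> real (nat \<lceil>c * phi T\<rceil>) / phi T) at_top"
    using ev_pos
  proof eventually_elim
    case (elim T)
    have "c * phi T \<le> real (nat \<lceil>c * phi T\<rceil>)" using assms elim nat_ceil_bounds[of "c * phi T"] by simp
    then show ?case using elim by (simp add: field_simps)
  qed
  show "eventually (\<lambda>T. real (nat \<lceil>c * phi T\<rceil>) / phi T \<le> c + 1 / phi T) at_top"
    using ev_pos
  proof eventually_elim
    case (elim T)
    have "real (nat \<lceil>c * phi T\<rceil>) \<le> c * phi T + 1" using assms elim nat_ceil_bounds[of "c * phi T"] by simp
    then show ?case using elim by (simp add: field_simps)
  qed
  show "((\<lambda>T. c) \<longlongrightarrow> c) at_top" by simp
  show "((\<lambda>T. c + 1 / phi T) \<longlongrightarrow> c) at_top"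
    using tendsto_add[OF tendsto_const inv_phi, of c] by simp
qed

lemma lnlim:
  assumes "c > 0"
  shows "((\<lambda>T. ln (real (nat \<lceil>c * phi T\<rceil>) + 1) / phi T) \<longlongrightarrow> 0) at_top"
proof (rule tendsto_sandwich[where f = "\<lambda>T. 0" and h = "\<lambda>T. ln (c * phi T + 2) / phi T"])
  have A: "((\<lambda>u. ln (c * u + 2) / u) \<longlongrightarrow> 0) at_top" using assms by real_asymp
  show "((\<lambda>T. ln (c * phi T + 2) / phi T) \<longlongrightarrow> 0) at_top"
    using filterlim_compose[OF A phiinf] by simp
  show "eventually (\<lambda>T. 0 \<le> ln (real (nat \<lceil>c * phi T\<rceil>) + 1) / phi T) at_top"
    using ev_pos by eventually_elim simp
  show "eventually (\<lambda>T. ln (real (nat \<lceil>c * phi T\<rceil>) + 1) / phi T \<le> ln (c * phi T + 2) / phi T) at_top"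
    using ev_pos
  proof eventually_elim
    case (elim T)
    have "real (nat \<lceil>c * phi T\<rceil>) \<le> c * phi T + 1" using assms elim nat_ceil_bounds[of "c * phi T"] by simp
    then have "ln (real (nat \<lceil>c * phi T\<rceil>) + 1) \<le> ln (c * phi T + 2)"
      by (intro ln_mono) auto
    then show ?case using elim by (intro divide_right_mono) auto
  qed
qed (simp)

lemma lnlinT:
  assumes "c > 0"
  shows "((\<lambda>T. ln (1 + c * T) / phi T) \<longlongrightarrow> 0) at_top"
proof -
  have A: "((\<lambda>T. ln (1 + c * T) / T) \<longlongrightarrow> 0) at_top" using assms by real_asymp
  have L: "((\<lambda>T. ln (1 + c * T) / T * (T / phi T)) \<longlongrightarrow> 0) at_top"
    using tendsto_mult[OF A T_over_phi] by simp
  have E: "eventually (\<lambda>T. ln (1 + c * T) / T * (T / phi T) = ln (1 + c * T) / phi T) at_top"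
    using ev_pos by eventually_elim simp
  show ?thesis by (rule Lim_transform_eventually[OF L E])
qed

end

context chainpar begin
lemma xi_low:
  assumes T: "T > 0" and al: "alpha > 0" and t: "t \<ge> 1" and m: "m \<ge> 1"
  shows "pmf (poisson_pmf (alpha*T)) (t+m) * ((1-p) / t * p^m)
         \<le> measure (measure_pmf (xi_law lam mu alpha T)) {m, Suc m}"
proof -
  have xi: "xi_law lam mu alpha T = bind_pmf (poisson_pmf (alpha*T)) (chn lam mu 0)"
    using T al by (simp add: xi_law_def eta_law_chn[abs_def])
  have "ennreal (pmf (poisson_pmf (alpha*T)) (t+m) * ((1-p) / t * p^m))
      = ennreal (pmf (poisson_pmf (alpha*T)) (t+m)) * ennreal ((1-p) / t * p^m)"
    using p_pos p_lt1 by (intro ennreal_mult) auto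
  also have "\<dots> \<le> ennreal (pmf (poisson_pmf (alpha*T)) (t+m)) * emeasure (measure_pmf (chn lam mu 0 (t+m))) {m, Suc m}"
    by (intro mult_left_mono chn_target t m) simp
  also have "\<dots> \<le> emeasure (measure_pmf (xi_law lam mu alpha T)) {m, Suc m}"
    unfolding xi by (rule emeasure_bind_ge)
  finally show ?thesis
    by (simp add: measure_pmf.emeasure_eq_measure del: ennreal_plus)
qed
end

context ldpsetup begin

definition "L0 = ln ((lam+mu)/lam)"
definition "g c = c * ln (c*k/alpha) - c + alpha/k"
definition "Jr x = x * L0 + g (max x (alpha/k))"

lemma L0_pos: "L0 > 0"
  using lam_pos mu_pos by (simp add: L0_def)

lemma lnp: "ln p = - L0"
  using lam_pos mu_pos by (simp add: L0_def p_def ln_div)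

lemma p_exp: "p = exp (- L0)"
  using p_pos lnp by (metis exp_ln)

lemma g_nonneg: "c > 0 \<Longrightarrow> g c \<ge> 0"
proof -
  assume c: "c > 0"
  define u where "u = c*k/alpha"
  have u: "u > 0" using c kp al by (simp add: u_def)
  have "ln (1/u) \<le> 1/u - 1" using u by (intro ln_le_minus_one) auto
  then have "ln u \<ge> 1 - 1/u" using u by (simp add: ln_div)
  then have "c * ln u \<ge> c * (1 - 1/u)" using c by (intro mult_left_mono) auto
  moreover have "c * (1 - 1/u) = c - alpha/k" using c kp al by (simp add: u_def field_simps)
  ultimately show "g c \<ge> 0" by (simp add: g_def u_def)
qed

lemma g_ak: "g (alpha/k) = 0"
  using al kp by (simp add: g_def)

lemma J_eq: "x \<ge> 0 \<Longrightarrow> J_rate lam mu alpha k x = ereal (Jr x)"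
proof -
  assume x: "x \<ge> 0"
  show ?thesis
  proof (cases "x < alpha/k")
    case True
    then show ?thesis using x by (simp add: J_rate_def Jr_def g_ak L0_def mult.commute)
  next
    case False
    then have xa: "x \<ge> alpha/k" by simp
    then have xp: "x > 0" using al kp by (smt (verit) divide_pos_pos)
    have e: "k * x * (lam + mu) / (alpha * lam) = ((lam+mu)/lam) * (x*k/alpha)"
      by (simp add: field_simps)
    have "ln (((lam+mu)/lam) * (x*k/alpha)) = L0 + ln (x*k/alpha)"
      unfolding L0_def using lam_pos mu_pos xp al kp by (intro ln_mult_pos) auto
    then have "ln (k * x * (lam + mu) / (alpha * lam)) = L0 + ln (x*k/alpha)"
      by (simp only: e)
    then show ?thesis using xa False x
      by (simp add: J_rate_def Jr_def g_def max_def algebra_simps)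
  qed
qed

lemma max_pos: "max x (alpha/k) > 0"
  using al kp by (simp add: less_max_iff_disj)

lemma Jr_ge: "x \<ge> 0 \<Longrightarrow> Jr x \<ge> x * L0"
  using g_nonneg[OF max_pos[of x]] by (simp add: Jr_def)

lemma J_fin: "J_rate lam mu alpha k x < \<infinity> \<Longrightarrow> x \<ge> 0"
  by (cases "x < 0") (auto simp: J_rate_def)

lemma Jr_cont: "continuous_on UNIV Jr"
proof -
  have "continuous_on UNIV (\<lambda>x. x * L0 + ((max x (alpha/k)) * ln ((max x (alpha/k))*k/alpha) - (max x (alpha/k)) + alpha/k))"
  proof -
    have mp: "max x (alpha/k) \<noteq> 0" for x using max_pos[of x] by simp
    show ?thesis using al kp by (intro continuous_intros) (auto simp: mp)
  qed
  then show ?thesis by (simp add: Jr_def[abs_def] g_def)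
qed

end

context ldpsetup begin

lemma g_s:
  assumes a: "a \<ge> 0"
  shows "- a * ln (max 1 (a*k/alpha)) + (alpha/k) * (max 1 (a*k/alpha) - 1) = - g (max a (alpha/k))"
proof (cases "a \<le> alpha/k")
  case True
  then have "a*k/alpha \<le> 1" using al kp by (simp add: field_simps)
  then show ?thesis using True by (simp add: g_ak max_def)
next
  case False
  then have "a*k/alpha > 1" using al kp by (simp add: field_simps)
  moreover have "(alpha/k) * (a*k/alpha - 1) = a - alpha/k" using al kp by (simp add: field_simps)
  ultimately show ?thesis using False by (simp add: g_def max_def)
qed

lemma upper_core:
  assumes a: "a \<ge> 0" and y: "y > - Jr a"
  shows "eventually (\<lambda>T. \<forall>q. 0 < q \<and> q \<le> measure (measure_pmf (xi_law lam mu alpha T)) {j. real j \<ge> a * phi T}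
            \<longrightarrow> ln q / phi T < y) at_top"
proof -
  define s where "s = max 1 (a*k/alpha)"
  have s1: "s \<ge> 1" by (simp add: s_def)
  define eps where "eps = y + Jr a"
  have eps: "eps > 0" using y by (simp add: eps_def)
  define d where "d = min (L0/2) (eps / (2*(a+1)))"
  have d0: "d > 0" using L0_pos eps a by (simp add: d_def)
  have dL: "d \<le> L0/2" unfolding d_def by (rule min.cobounded1)
  have ad: "a * d \<le> eps/2"
  proof -
    have "a * d \<le> a * (eps / (2*(a+1)))" using a by (intro mult_left_mono) (auto simp: d_def)
    also have "\<dots> \<le> eps/2" using a eps by (simp add: field_simps)
    finally show ?thesis .
  qed
  define r where "r = exp (L0 - d)"
  have r1: "r > 1" using dL L0_pos by (simp add: r_def)
  have pr: "p * r < 1"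
  proof -
    have "p * r = exp (- d)" by (simp add: p_exp r_def mult_exp_exp)
    then show ?thesis using d0 by simp
  qed
  obtain K where K: "K \<ge> r" "\<forall>i\<ge>1. p * r^(Suc i) + (1-p) * (\<Sum>j<i. r^j) / i \<le> r^i + K"
    using lyap_real[OF r1 pr] by blast
  have K0: "K > 0" using K r1 by simp
  define M where "M = alpha * (s-1) * (1/k) + 0 - a * ln (r * s)"
  have lnrs: "ln (r * s) = L0 - d + ln s" using s1 r1 by (simp add: ln_mult_pos r_def)
  have "M = - Jr a + a * d"
    using g_s[OF a] unfolding M_def Jr_def lnrs s_def[symmetric]
    by (simp add: algebra_simps diff_divide_distrib)
  then have My: "M < y" using ad eps by (simp add: eps_def)
  define F where "F T = alpha * (s-1) * (T / phi T) + ln (1 + (K*alpha* s) * T) / phi T - a * ln (r * s)" for T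
  have "(F \<longlongrightarrow> M) at_top"
    unfolding F_def M_def
    using K0 al s1 by (intro tendsto_intros T_over_phi lnlinT) auto
  then have evF: "eventually (\<lambda>T. F T < y) at_top"
    using My by (rule order_tendstoD(2))
  show ?thesis
    using evF ev_pos
  proof eventually_elim
    case (elim T)
    show ?case
    proof (intro allI impI)
      fix q assume q: "0 < q \<and> q \<le> measure (measure_pmf (xi_law lam mu alpha T)) {j. real j \<ge> a * phi T}"
      define L where "L = alpha * T"
      have L0': "L > 0" using elim al by (simp add: L_def)
      define x where "x = a * phi T"
      have x0: "x \<ge> 0" using a elim by (simp add: x_def)
      have bnd: "q \<le> exp (-L) * (exp (L * s) + K * (L * s) * exp (L * s)) / (r * s) powr x"
        using q xi_tail[where alpha=alpha and T=T, OF r1 K(2) K(1) s1 x0] elim al by (simp add: L_def x_def)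
      have U: "exp (-L) * (exp (L * s) + K * (L * s) * exp (L * s)) / (r * s) powr x
             = exp (L* s - L) * (1 + (K*alpha* s) * T) / (r * s) powr x"
      proof -
        have "exp (-L) * (exp (L * s) + K * (L * s) * exp (L * s)) = (exp (-L) * exp (L * s)) * (1 + K * L * s)"
          by (simp add: algebra_simps)
        also have "exp (-L) * exp (L * s) = exp (L* s - L)" by (simp add: mult_exp_exp)
        finally show ?thesis by (simp add: L_def algebra_simps)
      qed
      have pos1: "1 + (K*alpha* s) * T > 0" using K0 al s1 elim by (simp add: add_pos_nonneg)
      have rs: "r * s > 0" using r1 s1 by simp
      have "ln q \<le> ln (exp (L* s - L) * (1 + (K*alpha* s) * T) / (r * s) powr x)"
        using q bnd U by (intro ln_mono) auto
      also have "\<dots> = (L* s - L) + ln (1 + (K*alpha* s) * T) - x * ln (r * s)"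
        using pos1 rs r1 s1 by (simp add: ln_div ln_mult_pos ln_powr)
      finally have "ln q / phi T \<le> ((L* s - L) + ln (1 + (K*alpha* s) * T) - x * ln (r * s)) / phi T"
        using elim by (intro divide_right_mono) auto
      also have "\<dots> = F T"
        using elim by (simp add: F_def L_def x_def field_simps)
      finally show "ln q / phi T < y" using elim by simp
    qed
  qed
qed

end

context ldpsetup begin

lemma lower_core:
  assumes y: "y > 0" and c: "c > y" and z: "z < -(y*L0 + g c)"
  shows "eventually (\<lambda>T. 0 < measure (measure_pmf (xi_law lam mu alpha T)) {nat \<lceil>y * phi T\<rceil>, Suc (nat \<lceil>y * phi T\<rceil>)}
     \<and> z < ln (measure (measure_pmf (xi_law lam mu alpha T)) {nat \<lceil>y * phi T\<rceil>, Suc (nat \<lceil>y * phi T\<rceil>)}) / phi T) at_top"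
proof -
  define Mf where "Mf T = nat \<lceil>y * phi T\<rceil>" for T
  define Nf where "Nf T = nat \<lceil>c * phi T\<rceil>" for T
  have c0: "c > 0" using y c by simp
  define G where "G T = (real (Nf T) / phi T) * ln (alpha * T / (real (Nf T) + 1))
      - 2 * (ln (real (Nf T) + 1) / phi T) + real (Nf T) / phi T - alpha * (T / phi T)
      + ln (1-p) * (1 / phi T) - (real (Mf T) / phi T) * L0" for T
  define lim0 where "lim0 = c * ln (alpha * (1/k) / c) - 2 * 0 + c - alpha * (1/k) + ln (1-p) * 0 - y * L0"
  have NL: "((\<lambda>T. real (Nf T) / phi T) \<longlongrightarrow> c) at_top"
    unfolding Nf_def using c0 by (intro ceil_lim) simp
  have MLim: "((\<lambda>T. real (Mf T) / phi T) \<longlongrightarrow> y) at_top"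
    unfolding Mf_def using y by (intro ceil_lim) simp
  have LL: "((\<lambda>T. ln (real (Nf T) + 1) / phi T) \<longlongrightarrow> 0) at_top"
    unfolding Nf_def using c0 by (intro lnlim)
  have R1: "((\<lambda>T. alpha * (T / phi T) / (real (Nf T) / phi T + 1 / phi T)) \<longlongrightarrow> alpha * (1/k) / (c + 0)) at_top"
    using c0 by (intro tendsto_intros T_over_phi NL inv_phi) auto
  have R2: "eventually (\<lambda>T. alpha * (T / phi T) / (real (Nf T) / phi T + 1 / phi T) = alpha * T / (real (Nf T) + 1)) at_top"
    using ev_pos by eventually_elim (simp add: field_simps)
  have R: "((\<lambda>T. alpha * T / (real (Nf T) + 1)) \<longlongrightarrow> alpha * (1/k) / c) at_top"
    using Lim_transform_eventually[OF R1 R2] by simp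
  have "(G \<longlongrightarrow> lim0) at_top"
    unfolding G_def lim0_def using al kp c0
    by (intro tendsto_intros NL MLim LL R T_over_phi inv_phi) auto
  moreover have "lim0 = -(y*L0 + g c)"
  proof -
    have e: "alpha * (1/k) / c = inverse (c*k/alpha)" by simp
    have "ln (inverse (c*k/alpha)) = - ln (c*k/alpha)" using al kp c0 by (intro ln_inverse)
    then have "ln (alpha * (1/k) / c) = - ln (c*k/alpha)" by (simp only: e)
    then show ?thesis by (simp add: lim0_def g_def algebra_simps)
  qed
  ultimately have evG: "eventually (\<lambda>T. z < G T) at_top"
    using z by (auto intro: order_tendstoD(1))
  have evphi: "eventually (\<lambda>T. 2 / (c - y) \<le> phi T) at_top"
    using phiinf by (simp add: filterlim_at_top)
  have "eventually (\<lambda>T. 0 < measure (measure_pmf (xi_law lam mu alpha T)) {Mf T, Suc (Mf T)}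
     \<and> z < ln (measure (measure_pmf (xi_law lam mu alpha T)) {Mf T, Suc (Mf T)}) / phi T) at_top"
    using evG evphi ev_pos
  proof eventually_elim
    case (elim T)
    define N where "N = Nf T"
    define m where "m = Mf T"
    have Tp: "T > 0" and php: "phi T > 0" using elim by auto
    have Nb: "c * phi T \<le> real N" using nat_ceil_bounds[of "c * phi T"] c0 php by (simp add: N_def Nf_def)
    have mb: "y * phi T \<le> real m \<and> real m \<le> y * phi T + 1"
      using nat_ceil_bounds[of "y * phi T"] y php by (simp add: m_def Mf_def)
    have m1: "m \<ge> 1"
    proof -
      have "real m > 0" using mb y php by (smt (verit) mult_pos_pos)
      then show ?thesis by simp
    qed
    have "(c - y) * phi T \<ge> 2"
      using elim(2) c by (simp add: field_simps)
    then have "real N - real m \<ge> 1" using Nb mb by (simp add: algebra_simps)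
    then have Nm: "N \<ge> m + 1" by linarith
    define t where "t = N - m"
    have t1: "t \<ge> 1" using Nm by (simp add: t_def)
    have tN: "t + m = N" using Nm by (simp add: t_def)
    define lam' where "lam' = alpha * T"
    have l0: "lam' > 0" using al Tp by (simp add: lam'_def)
    define W where "W = pmf (poisson_pmf lam') N * ((1-p) / t * p^m)"
    have Wle: "W \<le> measure (measure_pmf (xi_law lam mu alpha T)) {m, Suc m}"
      using xi_low[OF Tp al t1 m1] by (simp add: W_def tN lam'_def)
    have pmfpos: "pmf (poisson_pmf lam') N > 0" using l0 by (simp add: pmf_poisson[OF l0])
    have Wpos: "W > 0" unfolding W_def using pmfpos p_pos p_lt1 t1 by (intro mult_pos_pos divide_pos_pos) auto
    have lnpmf: "ln (pmf (poisson_pmf lam') N) = real N * ln lam' - ln (fact N) - lam'"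
      using l0 by (simp add: pmf_poisson[OF l0] ln_mult_pos ln_div ln_realpow)
    have lnW: "ln W = ln (pmf (poisson_pmf lam') N) + ln (1-p) - ln t + real m * ln p"
      unfolding W_def using pmfpos p_pos p_lt1 t1
      by (simp add: ln_mult_pos ln_div ln_realpow)
    have lt: "ln (real t) \<le> ln (real N + 1)" using t1 tN by (intro ln_mono) auto
    have "ln W \<ge> real N * ln lam' - ((real N + 1) * ln (real N + 1) - real N) - lam' + ln (1-p) - ln (real N + 1) - real m * L0"
      using lnW lnpmf ln_fact_le[of N] lt lnp by simp
    moreover have "ln (lam' / (real N + 1)) = ln lam' - ln (real N + 1)"
      using l0 by (simp add: ln_div)
    moreover have "G T * phi T = real N * ln (lam' / (real N + 1)) - 2 * ln (real N + 1) + real N - lam' + ln (1-p) - real m * L0"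
      using php unfolding G_def N_def[symmetric] m_def[symmetric] lam'_def
      by (simp add: field_simps)
    ultimately have "ln W \<ge> G T * phi T"
      by (simp add: right_diff_distrib distrib_right; linarith)
    moreover have "ln W \<le> ln (measure (measure_pmf (xi_law lam mu alpha T)) {m, Suc m})"
      using Wle Wpos by (intro ln_mono) auto
    ultimately have "G T * phi T \<le> ln (measure (measure_pmf (xi_law lam mu alpha T)) {m, Suc m})"
      by linarith
    then have "G T \<le> ln (measure (measure_pmf (xi_law lam mu alpha T)) {m, Suc m}) / phi T"
      using php by (simp add: field_simps)
    then show ?case using elim(1) Wle Wpos by (simp add: m_def)
  qed
  then show ?thesis by (simp add: Mf_def)
qed

end

context ldpsetup begin

lemma Xform:
  assumes "phi T > 0" "q \<ge> 0"
  shows "eln q / ereal (phi T) = (if q = 0 then - \<infinity> else ereal (ln q / phi T))"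
  using assms by (simp add: eln_def)

lemma rate_nonneg: "J_rate lam mu alpha k x \<ge> 0"
proof (cases "x < 0")
  case True then show ?thesis by (simp add: J_rate_def)
next
  case False
  have "x * L0 \<ge> 0" using False L0_pos by simp
  then have "Jr x \<ge> 0" using Jr_ge[of x] False by linarith
  then show ?thesis using False J_eq[of x] by simp
qed

lemma rate_compact:
  assumes "c \<ge> 0"
  shows "compact {x. J_rate lam mu alpha k x \<le> ereal c}"
proof -
  have eq: "{x. J_rate lam mu alpha k x \<le> ereal c} = {x. 0 \<le> x} \<inter> {x. Jr x \<le> c}"
  proof (intro set_eqI iffI)
    fix x assume "x \<in> {x. J_rate lam mu alpha k x \<le> ereal c}"
    then have x: "J_rate lam mu alpha k x \<le> ereal c" by simp
    have "J_rate lam mu alpha k x < \<infinity>" by (rule order_le_less_trans[OF x]) simp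
    then have "x \<ge> 0" by (rule J_fin)
    then show "x \<in> {x. 0 \<le> x} \<inter> {x. Jr x \<le> c}" using x J_eq[of x] by simp
  next
    fix x assume "x \<in> {x. 0 \<le> x} \<inter> {x. Jr x \<le> c}"
    then show "x \<in> {x. J_rate lam mu alpha k x \<le> ereal c}" using J_eq[of x] by simp
  qed
  have cl: "closed ({x. 0 \<le> x} \<inter> {x. Jr x \<le> c})"
    using Jr_cont by (intro closed_Int closed_Collect_le continuous_intros) auto
  have "{x. 0 \<le> x} \<inter> {x. Jr x \<le> c} \<subseteq> {0..c/L0}"
  proof
    fix x assume x: "x \<in> {x. 0 \<le> x} \<inter> {x. Jr x \<le> c}"
    then have "x * L0 \<le> c" using Jr_ge[of x] by simp
    then show "x \<in> {0..c/L0}" using x L0_pos by (simp add: field_simps)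
  qed
  then have "bounded ({x. 0 \<le> x} \<inter> {x. Jr x \<le> c})"
    by (rule bounded_subset[OF bounded_closed_interval])
  then show ?thesis unfolding eq using cl by (simp add: compact_eq_bounded_closed)
qed

lemma upper_bound:
  "Limsup at_top (\<lambda>T. eln (measure_pmf.prob (xi_law lam mu alpha T) {n. real n / phi T \<in> B}) / ereal (phi T))
     \<le> - (INF x\<in>closure B. J_rate lam mu alpha k x)"
  unfolding Limsup_le_iff
proof (intro allI impI)
  fix y assume y: "y > - (INF x\<in>closure B. J_rate lam mu alpha k x)"
  then have yninf: "y \<noteq> - \<infinity>" by auto
  define S where "S = closure B \<inter> {0..}"
  show "eventually (\<lambda>T. eln (measure_pmf.prob (xi_law lam mu alpha T) {n. real n / phi T \<in> B}) / ereal (phi T) < y) at_top"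
  proof (cases "S = {}")
    case True
    show ?thesis using ev_pos
    proof eventually_elim
      case (elim T)
      have "{n. real n / phi T \<in> B} = {}"
      proof (rule ccontr)
        assume "{n. real n / phi T \<in> B} \<noteq> {}"
        then obtain n where "real n / phi T \<in> B" by auto
        then have "real n / phi T \<in> S" using elim closure_subset[of B] by (auto simp: S_def)
        then show False using True by simp
      qed
      then show ?case using elim yninf Xform[of T 0] by (simp add: eln_def)
    qed
  next
    case False
    have bdd: "bdd_below S" unfolding S_def by (rule bdd_belowI[of _ 0]) auto
    have clS: "closed S" unfolding S_def by (intro closed_Int closed_closure closed_atLeast)
    define a where "a = Inf S"
    have aS: "a \<in> S" unfolding a_def by (rule closed_contains_Inf[OF False bdd clS])
    then have a0: "a \<ge> 0" and aB: "a \<in> closure B" by (auto simp: S_def)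
    have "J_rate lam mu alpha k a \<ge> (INF x\<in>closure B. J_rate lam mu alpha k x)"
      using aB by (rule INF_lower)
    then have "- J_rate lam mu alpha k a \<le> - (INF x\<in>closure B. J_rate lam mu alpha k x)"
      by simp
    then have "- J_rate lam mu alpha k a < y" using y by (rule order_le_less_trans)
    then have ya: "- ereal (Jr a) < y" using J_eq[OF a0] by simp
    show ?thesis
    proof (cases y)
      case PInf
      show ?thesis using ev_pos
      proof eventually_elim
        case (elim T)
        then show ?case using PInf Xform[of T] by (simp add: eln_def)
      qed
    next
      case MInf then show ?thesis using yninf by simp
    next
      case (real y0)
      have y0: "y0 > - Jr a" using ya real by simp
      show ?thesis using upper_core[OF a0 y0] ev_pos
      proof eventually_elim
        case (elim T)
        define P where "P = measure_pmf.prob (xi_law lam mu alpha T) {n. real n / phi T \<in> B}"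
        have sub: "{n. real n / phi T \<in> B} \<subseteq> {j. real j \<ge> a * phi T}"
        proof
          fix n assume "n \<in> {n. real n / phi T \<in> B}"
          then have "real n / phi T \<in> S" using elim closure_subset[of B] by (auto simp: S_def)
          then have "a \<le> real n / phi T" unfolding a_def using bdd by (rule cInf_lower)
          then show "n \<in> {j. real j \<ge> a * phi T}" using elim by (simp add: field_simps)
        qed
        have "P \<le> measure_pmf.prob (xi_law lam mu alpha T) {j. real j \<ge> a * phi T}"
          unfolding P_def using sub by (rule measure_pmf.finite_measure_mono) simp
        moreover have P0: "P \<ge> 0" by (simp add: P_def)
        ultimately have Pb: "P \<le> measure_pmf.prob (xi_law lam mu alpha T) {j. real j \<ge> a * phi T}" "P \<ge> 0" by auto
        have "eln P / ereal (phi T) < y"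
        proof (cases "P = 0")
          case True
          then show ?thesis using elim real Xform[of T P] by simp
        next
          case False
          then have "ln P / phi T < y0" using elim(1) Pb by auto
          then show ?thesis using False elim real Xform[of T P] Pb by simp
        qed
        then show ?case by (simp add: P_def)
      qed
    qed
  qed
qed

end

context ldpsetup begin

lemma lower_bound:
  "Liminf at_top (\<lambda>T. eln (measure_pmf.prob (xi_law lam mu alpha T) {n. real n / phi T \<in> B}) / ereal (phi T))
     \<ge> - (INF x\<in>interior B. J_rate lam mu alpha k x)"
  unfolding le_Liminf_iff
proof (intro allI impI)
  fix y assume y: "y < - (INF x\<in>interior B. J_rate lam mu alpha k x)"
  then have "(INF x\<in>interior B. J_rate lam mu alpha k x) < - y"
    by (simp add: ereal_less_uminus_reorder)
  then obtain x where xB: "x \<in> interior B" and Jx: "J_rate lam mu alpha k x < - y"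
    by (auto simp: INF_less_iff)
  have "J_rate lam mu alpha k x < \<infinity>" using Jx by (rule order_less_le_trans) simp
  then have x0: "x \<ge> 0" by (rule J_fin)
  have Jx': "ereal (Jr x) < - y" using Jx J_eq[OF x0] by simp
  obtain z where zy: "y \<le> ereal z" and zJ: "z < - Jr x"
  proof (cases y)
    case (real y0)
    then show ?thesis using Jx' that[of y0] by simp
  next
    case PInf then show ?thesis using Jx' by simp
  next
    case MInf then show ?thesis using that[of "- Jr x - 1"] by simp
  qed
  obtain e where e0: "e > 0" and eB: "ball x e \<subseteq> interior B"
    using xB open_interior open_contains_ball by blast
  define M0 where "M0 = max x (alpha/k)"
  have M0p: "M0 > 0" using max_pos by (simp add: M0_def)
  define h where "h d = (x + d) * L0 + g (M0 + 2 * d)" for d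
  have "(h \<longlongrightarrow> h 0) (at_right 0)"
  proof -
    have "((\<lambda>d. (x + d) * L0 + ((M0 + 2 * d) * ln ((M0 + 2 * d) * k / alpha) - (M0 + 2 * d) + alpha / k))
           \<longlongrightarrow> (x + 0) * L0 + ((M0 + 2 * 0) * ln ((M0 + 2 * 0) * k / alpha) - (M0 + 2 * 0) + alpha / k)) (at_right 0)"
      using M0p al kp by (intro tendsto_intros) auto
    then show ?thesis unfolding h_def[abs_def] g_def by simp
  qed
  moreover have "h 0 = Jr x" by (simp add: h_def Jr_def M0_def)
  ultimately have ev1: "eventually (\<lambda>d. h d < - z) (at_right 0)"
    using zJ by (auto intro: order_tendstoD(2))
  have ev2: "eventually (\<lambda>d. d \<in> {0<..<e/4}) (at_right (0::real))"
    using e0 by (intro eventually_at_right_real) simp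
  have "eventually (\<lambda>d. h d < - z \<and> d \<in> {0<..<e/4}) (at_right (0::real))"
    using ev1 ev2 by (rule eventually_conj)
  then obtain d0 where d0: "h d0 < - z \<and> d0 \<in> {0<..<e/4}"
    using eventually_happens[of _ "at_right (0::real)"] trivial_limit_at_right_real by blast
  define d where "d = d0"
  have d: "h d < - z" "d < e/4" "d > 0" using d0 by (auto simp: d_def)
  define yy where "yy = x + d"
  define c where "c = M0 + 2 * d"
  have yy0: "yy > 0" using x0 d by (simp add: yy_def)
  have cyy: "c > yy" using d unfolding c_def yy_def M0_def by (simp add: max_def)
  have zc: "z < - (yy * L0 + g c)" using d(1) by (simp add: h_def yy_def c_def)
  have evinv: "eventually (\<lambda>T. 1 / phi T < e/4) at_top"
    using inv_phi e0 by (intro order_tendstoD(2)) auto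
  show "eventually (\<lambda>T. y < eln (measure_pmf.prob (xi_law lam mu alpha T) {n. real n / phi T \<in> B}) / ereal (phi T)) at_top"
    using lower_core[OF yy0 cyy zc] evinv ev_pos
  proof eventually_elim
    case (elim T)
    define m where "m = nat \<lceil>yy * phi T\<rceil>"
    define Q where "Q = measure_pmf.prob (xi_law lam mu alpha T) {m, Suc m}"
    define P where "P = measure_pmf.prob (xi_law lam mu alpha T) {n. real n / phi T \<in> B}"
    have php: "phi T > 0" using elim by simp
    have Q: "0 < Q" "z < ln Q / phi T" using elim(1) by (simp_all add: Q_def m_def)
    have mb: "yy * phi T \<le> real m \<and> real m \<le> yy * phi T + 1"
      using nat_ceil_bounds[of "yy * phi T"] yy0 php by (simp add: m_def)
    have inB: "real j / phi T \<in> B" if j: "j = m \<or> j = Suc m" for j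
    proof -
      have lo: "yy \<le> real j / phi T" using mb j php by (auto simp: field_simps)
      have "real j \<le> yy * phi T + 2" using mb j by auto
      then have "real j / phi T \<le> yy + 2 / phi T" using php by (simp add: field_simps)
      also have "\<dots> < x + e" using elim(2) d by (simp add: yy_def)
      finally have hi: "real j / phi T < x + e" .
      have "dist x (real j / phi T) < e" using lo hi d by (simp add: dist_real_def yy_def abs_if)
      then show ?thesis using eB interior_subset[of B] by auto
    qed
    have "Q \<le> P" unfolding Q_def P_def
      by (rule measure_pmf.finite_measure_mono) (use inB[of m] inB[of "Suc m"] in auto)
    then have P0: "P > 0" and lnPQ: "ln Q \<le> ln P" using Q by (auto intro: ln_mono)
    have "z < ln P / phi T"
    proof -
      have "ln Q / phi T \<le> ln P / phi T" using lnPQ php by (intro divide_right_mono) auto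
      then show ?thesis using Q by simp
    qed
    then have "ereal z < eln P / ereal (phi T)" using Xform[of T P] php P0 by simp
    then show ?case using zy by (simp add: P_def)
  qed
qed

end

theorem theorem2p2:
  fixes lam mu alpha k :: real and phi :: "real \<Rightarrow> real"
  assumes "lam > 0" and "mu > 0" and "alpha > 0"
    and "\<forall>T>0. phi T > 0"
    and "filterlim phi at_top at_top"
    and "k > 0" and "((\<lambda>T. phi T / T) \<longlongrightarrow> k) at_top"
  shows "LDP (\<lambda>T B. measure_pmf.prob (xi_law lam mu alpha T) {n. real n / phi T \<in> B})
             (J_rate lam mu alpha k) phi"
proof -
  interpret ldpsetup lam mu alpha k phi
    using assms by unfold_locales auto
  show ?thesis
    unfolding LDP_def using rate_nonneg rate_compact upper_bound lower_bound by blast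
qed

end
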